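(* Let $I$ be an index set, $S,T\in GL(2,\mathbb R)$, and for $r\in I$ let $P_r=S\,\mathrm{diag}\{p_{1r},p_{2r}\}S^{-1}$, $Q_r=T\,\mathrm{diag}\{q_{1r},q_{2r}\}T^{-1}$ with all $p_{kr},q_{kr}$ nonzero reals. There exists a diffeomorphism (equivalently, a real-analytic diffeomorphism) $f\colon\overline{\mathbb R}\to\overline{\mathbb R}$ with $f(P_r(x))=Q_r(f(x))$ for all $x\in\overline{\mathbb R}$, $r\in I$, if and only if there exists $\varepsilon\in\{1,-1\}$ with $\dfrac{q_{1r}}{q_{2r}}=\Bigl(\dfrac{p_{1r}}{p_{2r}}\Bigr)^{\varepsilon}$ for all $r\in I$.
   Context: $\overline{\mathbb R}=\mathbb R\cup\{\infty\}$ with its standard smooth structure as the real projective line. A matrix $\begin{pmatrix}a&b\\c&d\end{pmatrix}\in GL(2,\mathbb R)$ acts on $\overline{\mathbb R}$ by $x\mapsto\frac{ax+b}{cx+d}$. *)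

theory Defs
  imports "HOL-Analysis.Analysis"
begin

datatype rp1 = Fin real | Infty

text \<open>Standard smooth atlas of the projective line: rp1_chart False is x, defined away
  from infinity; rp1_chart True is 1/x (infinity sent to 0), defined away from 0.\<close>
fun rp1_cdom :: "bool \<Rightarrow> rp1 set" where
  "rp1_cdom False = range Fin"
| "rp1_cdom True = - {Fin 0}"

fun rp1_chart :: "bool \<Rightarrow> rp1 \<Rightarrow> real" where
  "rp1_chart False (Fin x) = x"
| "rp1_chart False Infty = 0"
| "rp1_chart True (Fin x) = 1 / x"
| "rp1_chart True Infty = 0"

fun rp1_chart_inv :: "bool \<Rightarrow> real \<Rightarrow> rp1" where
  "rp1_chart_inv False t = Fin t"
| "rp1_chart_inv True t = (if t = 0 then Infty else Fin (1 / t))"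

definition smooth_on :: "real set \<Rightarrow> (real \<Rightarrow> real) \<Rightarrow> bool" where
  "smooth_on V h \<longleftrightarrow>
     (\<exists>D. D 0 = h \<and> (\<forall>n. \<forall>t\<in>V. (D n has_real_derivative D (Suc n) t) (at t)))"

definition smooth_map :: "(rp1 \<Rightarrow> rp1) \<Rightarrow> bool" where
  "smooth_map g \<longleftrightarrow>
     (\<forall>p. \<exists>i j V. open V \<and> p \<in> rp1_cdom i \<and> rp1_chart i p \<in> V \<and>
        (\<forall>t\<in>V. g (rp1_chart_inv i t) \<in> rp1_cdom j) \<and>
        smooth_on V (\<lambda>t. rp1_chart j (g (rp1_chart_inv i t))))"

definition diffeo :: "(rp1 \<Rightarrow> rp1) \<Rightarrow> bool" where
  "diffeo g \<longleftrightarrow> bij g \<and> smooth_map g \<and> smooth_map (inv g)"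

fun mob :: "real^2^2 \<Rightarrow> rp1 \<Rightarrow> rp1" where
  "mob A (Fin x) =
     (if A$2$1 * x + A$2$2 = 0 then Infty
      else Fin ((A$1$1 * x + A$1$2) / (A$2$1 * x + A$2$2)))"
| "mob A Infty = (if A$2$1 = 0 then Infty else Fin (A$1$1 / A$2$1))"

definition diag2 :: "real \<Rightarrow> real \<Rightarrow> real^2^2" where
  "diag2 a b = (\<chi> i j. if i = j then (if i = 1 then a else b) else 0)"

end

theory Submission
  imports Defs
begin

definition projp :: "real \<times> real \<Rightarrow> rp1" where
  "projp v = (if snd v = 0 then Infty else Fin (fst v / snd v))"
definition ap :: "real^2^2 \<Rightarrow> real \<times> real \<Rightarrow> real \<times> real" where
  "ap A v = (A$1$1 * fst v + A$1$2 * snd v, A$2$1 * fst v + A$2$2 * snd v)"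
definition sw :: "bool \<Rightarrow> real \<times> real \<Rightarrow> real \<times> real" where
  "sw b v = (if b then (snd v, fst v) else v)"
definition smul :: "real \<Rightarrow> real \<times> real \<Rightarrow> real \<times> real" where
  "smul c v = (c * fst v, c * snd v)"
definition wfun :: "bool \<Rightarrow> real^2^2 \<Rightarrow> bool \<Rightarrow> real \<Rightarrow> real \<times> real" where
  "wfun j A i t = sw j (ap A (sw i (t, 1)))"

lemma mob_projp: assumes "v \<noteq> (0,0)" shows "mob A (projp v) = projp (ap A v)"
proof -
  obtain a b where v: "v = (a,b)" by (cases v)
  show ?thesis
  proof (cases "b = 0")
    case True
    then have "a \<noteq> 0" using assms v by simp
    then show ?thesis using True v by (simp add: projp_def ap_def)
  next
    case False
    have d: "A$2$1*a/b + A$2$2 = (A$2$1*a + A$2$2*b)/b"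
      and n: "A$1$1*a/b + A$1$2 = (A$1$1*a + A$1$2*b)/b" using False by (simp_all add: field_simps)
    show ?thesis using False v by (simp add: projp_def ap_def d n)
  qed
qed

lemma ap_mult: "ap (A ** B) v = ap A (ap B v)"
  by (simp add: ap_def matrix_matrix_mult_def sum_2 algebra_simps)

lemma ap_mat1[simp]: "ap (mat 1) v = v"
  by (simp add: ap_def mat_def)

lemma ap_smul: "ap A (smul c v) = smul c (ap A v)"
  by (simp add: ap_def smul_def algebra_simps)

lemma ap_nonzero: assumes "det A \<noteq> 0" "v \<noteq> (0,0)" shows "ap A v \<noteq> (0,0)"
proof
  assume h: "ap A v = (0,0)"
  obtain x y where v: "v = (x,y)" by (cases v)
  have e1: "A$1$1*x + A$1$2*y = 0" and e2: "A$2$1*x + A$2$2*y = 0" using h v by (auto simp: ap_def)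
  have "det A * x = A$2$2 * (A$1$1*x + A$1$2*y) - A$1$2*(A$2$1*x + A$2$2*y)"
    by (simp add: det_2 algebra_simps)
  hence "x = 0" using e1 e2 assms by simp
  have "det A * y = A$1$1 * (A$2$1*x + A$2$2*y) - A$2$1*(A$1$1*x + A$1$2*y)"
    by (simp add: det_2 algebra_simps)
  hence "y = 0" using e1 e2 assms by simp
  show False using assms(2) v \<open>x = 0\<close> \<open>y = 0\<close> by simp
qed

lemma projp_surj: "\<exists>v. v \<noteq> (0,0) \<and> p = projp v"
proof (cases p)
  case (Fin x) thus ?thesis by (intro exI[of _ "(x,1)"]) (simp add: projp_def)
next
  case Infty thus ?thesis by (intro exI[of _ "(1,0)"]) (simp add: projp_def)
qed

lemma mob_comp: assumes "det B \<noteq> 0" shows "mob (A ** B) x = mob A (mob B x)"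
proof -
  obtain v where v: "v \<noteq> (0,0)" "x = projp v" using projp_surj by blast
  show ?thesis using v ap_nonzero[OF assms v(1)] by (simp add: mob_projp ap_mult)
qed

lemma mob_mat1[simp]: "mob (mat 1) x = x"
  by (cases x) (simp_all add: mat_def)

lemma projp_smul: "c \<noteq> 0 \<Longrightarrow> projp (smul c v) = projp v"
  by (simp add: projp_def smul_def)

lemma smul_nz: "c \<noteq> 0 \<Longrightarrow> v \<noteq> (0,0) \<Longrightarrow> smul c v \<noteq> (0,0)"
  by (cases v) (simp add: smul_def)

lemma projp_eq_cross: assumes "u \<noteq> (0,0)" "v \<noteq> (0,0)" "projp u = projp v"
  shows "fst u * snd v = snd u * fst v"
  using assms by (cases u; cases v) (auto simp: projp_def field_simps split: if_splits)

lemma chart_inv_projp: "rp1_chart_inv i t = projp (sw i (t,1))"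
  by (cases i) (simp_all add: projp_def sw_def)

lemma chart_projp: "rp1_chart i (projp v) = fst (sw i v) / snd (sw i v)"
  by (cases i; cases "snd v = 0") (simp_all add: projp_def sw_def)

lemma cdom_projp: "v \<noteq> (0,0) \<Longrightarrow> projp v \<in> rp1_cdom i \<longleftrightarrow> snd (sw i v) \<noteq> 0"
  by (cases i; cases v) (auto simp: projp_def sw_def)

lemma chart_inv_chart: "x \<in> rp1_cdom i \<Longrightarrow> rp1_chart_inv i (rp1_chart i x) = x"
  by (cases i; cases x) auto

lemma sw_nz: "sw i (t,1) \<noteq> (0,0)"
  by (simp add: sw_def)

lemma chart_mob: "rp1_chart j (mob A (rp1_chart_inv i t)) = fst (wfun j A i t) / snd (wfun j A i t)"
  by (simp add: chart_inv_projp mob_projp sw_nz chart_projp wfun_def)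

lemma mob_cdom: "det A \<noteq> 0 \<Longrightarrow> mob A (rp1_chart_inv i t) \<in> rp1_cdom j \<longleftrightarrow> snd (wfun j A i t) \<noteq> 0"
  by (simp add: chart_inv_projp mob_projp sw_nz cdom_projp ap_nonzero wfun_def)

lemma wfun_lin: "wfun j A i t =
   ((fst (wfun j A i 1) - fst (wfun j A i 0)) * t + fst (wfun j A i 0),
    (snd (wfun j A i 1) - snd (wfun j A i 0)) * t + snd (wfun j A i 0))"
  by (cases i; cases j) (simp_all add: wfun_def sw_def ap_def algebra_simps)

lemma wfun_det: "(fst (wfun j A i 1) - fst (wfun j A i 0)) * snd (wfun j A i 0)
    - fst (wfun j A i 0) * (snd (wfun j A i 1) - snd (wfun j A i 0))
   = (if i = j then det A else - det A)"
  by (cases i; cases j) (simp_all add: wfun_def sw_def ap_def det_2 algebra_simps)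


lemma rat_deriv: assumes "c*t+d \<noteq> 0"
  shows "((\<lambda>t. (a*t+b)/(c*t+d)) has_real_derivative (a*d-b*c)/(c*t+d)^2) (at t)"
proof -
  have "((\<lambda>t. (a*t+b)/(c*t+d)) has_real_derivative (a*(c*t+d) - (a*t+b)*c)/((c*t+d)*(c*t+d))) (at t)"
    using assms by (auto intro!: derivative_eq_intros)
  moreover have "(a*(c*t+d) - (a*t+b)*c)/((c*t+d)*(c*t+d)) = (a*d-b*c)/(c*t+d)^2"
    by (simp add: power2_eq_square algebra_simps)
  ultimately show ?thesis by simp
qed

lemma pow_deriv: assumes "c*t+d \<noteq> 0"
  shows "((\<lambda>t. K / (c*t+d)^(Suc (Suc m))) has_real_derivative
           (K * (- c) * real (Suc (Suc m))) / (c*t+d)^(Suc (Suc (Suc m)))) (at t)"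
proof -
  have lin: "((\<lambda>t. c*t+d) has_real_derivative c) (at t)"
    by (auto intro!: derivative_eq_intros)
  have p: "((\<lambda>t. (c*t+d)^(Suc (Suc m))) has_real_derivative real (Suc (Suc m)) * (c * (c*t+d)^(Suc m))) (at t)"
    using DERIV_power[OF lin, of "Suc (Suc m)"] by simp
  have "((\<lambda>t. K / (c*t+d)^(Suc (Suc m))) has_real_derivative
     (0 * (c*t+d)^(Suc (Suc m)) - K * (real (Suc (Suc m)) * (c * (c*t+d)^(Suc m)))) / ((c*t+d)^(Suc (Suc m)) * (c*t+d)^(Suc (Suc m)))) (at t)"
    by (rule DERIV_divide[OF DERIV_const p]) (use assms in simp)
  moreover have "(0 * (c*t+d)^(Suc (Suc m)) - K * (real (Suc (Suc m)) * (c * (c*t+d)^(Suc m)))) / ((c*t+d)^(Suc (Suc m)) * (c*t+d)^(Suc (Suc m)))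
     = (K * (- c) * real (Suc (Suc m))) / (c*t+d)^(Suc (Suc (Suc m)))"
  proof -
    define u where "u = c*t+d"
    define n where "n = real (Suc (Suc m))"
    have u: "u \<noteq> 0" using assms u_def by simp
    have "(0 * u^(Suc (Suc m)) - K * (n * (c * u^(Suc m)))) / (u^(Suc (Suc m)) * u^(Suc (Suc m)))
      = (K * (- c) * n) / u^(Suc (Suc (Suc m)))"
      using u by (simp add: field_simps)
    then show ?thesis by (simp add: u_def n_def)
  qed
  ultimately show ?thesis by simp
qed

lemma rat_smooth: "smooth_on {t. c*t+d \<noteq> 0} (\<lambda>t. (a*t+b)/(c*t+d))"
proof -
  define K :: "nat \<Rightarrow> real" where "K m = (a*d-b*c) * (-c)^m * fact (Suc m)" for m
  define D :: "nat \<Rightarrow> real \<Rightarrow> real" where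
    "D n = (case n of 0 \<Rightarrow> (\<lambda>t. (a*t+b)/(c*t+d)) | Suc m \<Rightarrow> (\<lambda>t. K m / (c*t+d)^(Suc (Suc m))))" for n
  have "\<forall>n. \<forall>t\<in>{t. c*t+d \<noteq> 0}. (D n has_real_derivative D (Suc n) t) (at t)"
  proof (intro allI ballI)
    fix n t assume t: "t \<in> {t. c*t+d \<noteq> 0}"
    show "(D n has_real_derivative D (Suc n) t) (at t)"
    proof (cases n)
      case 0
      have "K 0 = a*d-b*c" by (simp add: K_def)
      then show ?thesis using 0 rat_deriv[of c t d a b] t by (simp add: D_def power2_eq_square)
    next
      case (Suc m)
      have "K (Suc m) = K m * (- c) * real (Suc (Suc m))"
        by (simp add: K_def algebra_simps)
      then show ?thesis using Suc pow_deriv[of c t d "K m" m] t by (simp add: D_def)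
    qed
  qed
  moreover have "D 0 = (\<lambda>t. (a*t+b)/(c*t+d))" by (simp add: D_def)
  ultimately show ?thesis unfolding smooth_on_def by blast
qed

lemma fix_deriv: assumes "ap A w = smul \<kappa> w" "w \<noteq> (0,0)" "snd (sw i w) \<noteq> 0"
  shows "snd (wfun i A i (fst (sw i w)/snd (sw i w))) = \<kappa>"
proof -
  obtain x y where w: "w = (x,y)" by (cases w)
  have e2: "A$2$1*x + A$2$2*y = \<kappa>*y" and e1: "A$1$1*x + A$1$2*y = \<kappa>*x"
    using assms(1) w by (auto simp: ap_def smul_def)
  show ?thesis
  proof (cases i)
    case True
    then have "x \<noteq> 0" using assms(3) w by (simp add: sw_def)
    have "snd (wfun i A i (fst (sw i w)/snd (sw i w))) = (A$1$1*x + A$1$2*y)/x"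
      using True \<open>x\<noteq>0\<close> w by (simp add: wfun_def sw_def ap_def field_simps)
    then show ?thesis using e1 \<open>x\<noteq>0\<close> by simp
  next
    case False
    then have "y \<noteq> 0" using assms(3) w by (simp add: sw_def)
    have "snd (wfun i A i (fst (sw i w)/snd (sw i w))) = (A$2$1*x + A$2$2*y)/y"
      using False \<open>y\<noteq>0\<close> w by (simp add: wfun_def sw_def ap_def field_simps)
    then show ?thesis using e2 \<open>y\<noteq>0\<close> by simp
  qed
qed


lemma open_lin: "open {t::real. c*t+d \<noteq> 0}"
  by (rule open_Collect_neq) (auto intro!: continuous_intros)

lemma chart_mob_rat: "(\<lambda>t. rp1_chart j (mob A (rp1_chart_inv i t))) =
  (\<lambda>t. ((fst (wfun j A i 1) - fst (wfun j A i 0)) * t + fst (wfun j A i 0)) /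
        ((snd (wfun j A i 1) - snd (wfun j A i 0)) * t + snd (wfun j A i 0)))"
proof
  fix t
  have e: "wfun j A i t = ((fst (wfun j A i 1) - fst (wfun j A i 0)) * t + fst (wfun j A i 0),
    (snd (wfun j A i 1) - snd (wfun j A i 0)) * t + snd (wfun j A i 0))" by (rule wfun_lin)
  show "rp1_chart j (mob A (rp1_chart_inv i t)) = ((fst (wfun j A i 1) - fst (wfun j A i 0)) * t + fst (wfun j A i 0)) /
        ((snd (wfun j A i 1) - snd (wfun j A i 0)) * t + snd (wfun j A i 0))"
    unfolding chart_mob by (subst e, subst e, simp)
qed

lemma snd_wfun: "snd (wfun j A i t) = (snd (wfun j A i 1) - snd (wfun j A i 0)) * t + snd (wfun j A i 0)"
  using wfun_lin[of j A i t] by (metis snd_conv)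

lemma mob_smooth: assumes "det A \<noteq> 0" shows "smooth_map (mob A)"
  unfolding smooth_map_def
proof
  fix p
  define i where "i = (p = Infty)"
  define j where "j = (mob A p = Infty)"
  have pi: "p \<in> rp1_cdom i" by (cases p) (auto simp: i_def)
  have pj: "mob A p \<in> rp1_cdom j" by (cases "mob A p") (auto simp: j_def)
  define c where "c = snd (wfun j A i 1) - snd (wfun j A i 0)"
  define d where "d = snd (wfun j A i 0)"
  define V where "V = {t. c*t+d \<noteq> 0}"
  have sw: "snd (wfun j A i t) = c*t+d" for t by (simp add: c_def d_def snd_wfun[of j A i t])
  have "open V" unfolding V_def by (rule open_lin)
  moreover have "rp1_chart i p \<in> V"
    using pj mob_cdom[OF assms, of i "rp1_chart i p" j] chart_inv_chart[OF pi] by (simp add: V_def sw)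
  moreover have "\<forall>t\<in>V. mob A (rp1_chart_inv i t) \<in> rp1_cdom j"
    using mob_cdom[OF assms] by (simp add: V_def sw)
  moreover have "smooth_on V (\<lambda>t. rp1_chart j (mob A (rp1_chart_inv i t)))"
    unfolding chart_mob_rat V_def c_def d_def by (rule rat_smooth)
  ultimately show "\<exists>i j V. open V \<and> p \<in> rp1_cdom i \<and> rp1_chart i p \<in> V \<and>
        (\<forall>t\<in>V. mob A (rp1_chart_inv i t) \<in> rp1_cdom j) \<and>
        smooth_on V (\<lambda>t. rp1_chart j (mob A (rp1_chart_inv i t)))"
    using pi by blast
qed

lemma minv: assumes "invertible A"
  shows "A ** matrix_inv A = mat 1" "matrix_inv A ** A = mat 1"
proof -
  have "\<exists>A'. A ** A' = mat 1 \<and> A' ** A = mat 1" using assms by (simp add: invertible_def)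
  then have "A ** matrix_inv A = mat 1 \<and> matrix_inv A ** A = mat 1"
    unfolding matrix_inv_def by (rule someI_ex)
  then show "A ** matrix_inv A = mat 1" "matrix_inv A ** A = mat 1" by auto
qed

lemma det_minv: assumes "invertible (A::real^2^2)" shows "det A * det (matrix_inv A) = 1"
  using minv(1)[OF assms] by (metis det_I det_mul)

lemma mob_inv_l: "invertible A \<Longrightarrow> mob (matrix_inv A) (mob A x) = x"
  using minv(2)[of A] mob_comp[of A "matrix_inv A" x] invertible_det_nz by force

lemma mob_inv_r: "invertible (A::real^2^2) \<Longrightarrow> mob A (mob (matrix_inv A) x) = x"
proof -
  assume a: "invertible A"
  have "det (matrix_inv A) \<noteq> 0" using det_minv[OF a] by auto
  then show ?thesis using minv(1)[OF a] mob_comp[of "matrix_inv A" A x] by simp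
qed

lemma mob_diffeo: assumes "invertible (A::real^2^2)" shows "diffeo (mob A)"
proof -
  have d1: "det A \<noteq> 0" using assms invertible_det_nz by blast
  have d2: "det (matrix_inv A) \<noteq> 0" using det_minv[OF assms] by auto
  have c1: "mob A \<circ> mob (matrix_inv A) = id" and c2: "mob (matrix_inv A) \<circ> mob A = id"
    using mob_inv_l[OF assms] mob_inv_r[OF assms] by auto
  have "inv (mob A) = mob (matrix_inv A)" by (rule inv_unique_comp[OF c1 c2])
  then show ?thesis unfolding diffeo_def using o_bij[OF c2 c1] mob_smooth[OF d1] mob_smooth[OF d2] by simp
qed


lemma chart_mob_deriv: assumes "snd (wfun j A i t) \<noteq> 0"
  shows "((\<lambda>t. rp1_chart j (mob A (rp1_chart_inv i t))) has_real_derivative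
     (if i = j then det A else - det A) / (snd (wfun j A i t))^2) (at t)"
proof -
  define a where "a = fst (wfun j A i 1) - fst (wfun j A i 0)"
  define b where "b = fst (wfun j A i 0)"
  define c where "c = snd (wfun j A i 1) - snd (wfun j A i 0)"
  define d where "d = snd (wfun j A i 0)"
  have e1: "c*t+d = snd (wfun j A i t)" using snd_wfun[of j A i t] by (simp add: c_def d_def)
  have e2: "a*d-b*c = (if i = j then det A else - det A)" using wfun_det[of j A i] by (simp add: a_def b_def c_def d_def)
  have "((\<lambda>t. (a*t+b)/(c*t+d)) has_real_derivative (a*d-b*c)/(c*t+d)^2) (at t)"
    by (rule rat_deriv) (simp add: e1 assms)
  then have "((\<lambda>t. rp1_chart j (mob A (rp1_chart_inv i t))) has_real_derivative (a*d-b*c)/(c*t+d)^2) (at t)"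
    by (subst chart_mob_rat) (simp only: a_def b_def c_def d_def)
  then show ?thesis by (simp only: e1 e2)
qed

lemma ev_nz: "isCont h x \<Longrightarrow> h x \<noteq> (0::real) \<Longrightarrow> eventually (\<lambda>y. h y \<noteq> 0) (nhds x)"
  unfolding eventually_nhds_conv_at isCont_def using tendsto_imp_eventually_ne by blast

lemma isCont_snd_wfun: "isCont (\<lambda>s. snd (wfun j A i s)) s"
proof -
  have e: "(\<lambda>s. snd (wfun j A i s)) = (\<lambda>s. (snd (wfun j A i 1) - snd (wfun j A i 0)) * s + snd (wfun j A i 0))"
    by (rule ext, rule snd_wfun)
  show ?thesis unfolding e by (intro continuous_intros)
qed

lemma deriv_nz:
  assumes df: "diffeo f" and V: "open V" "a \<in> rp1_cdom i" "rp1_chart i a \<in> V"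
    "\<forall>t\<in>V. f (rp1_chart_inv i t) \<in> rp1_cdom j"
    and dv: "((\<lambda>t. rp1_chart j (f (rp1_chart_inv i t))) has_real_derivative d) (at (rp1_chart i a))"
  shows "d \<noteq> 0"
proof -
  define \<phi> where "\<phi> = (\<lambda>t. rp1_chart j (f (rp1_chart_inv i t)))"
  define t0 where "t0 = rp1_chart i a"
  define b where "b = f a"
  have bij: "bij f" and sm: "smooth_map (inv f)" using df by (auto simp: diffeo_def)
  obtain i' j' V' where V': "open V'" "b \<in> rp1_cdom i'" "rp1_chart i' b \<in> V'"
    "\<forall>s\<in>V'. inv f (rp1_chart_inv i' s) \<in> rp1_cdom j'"
    "smooth_on V' (\<lambda>s. rp1_chart j' (inv f (rp1_chart_inv i' s)))"
    using sm unfolding smooth_map_def by blast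
  then obtain E where E: "E 0 = (\<lambda>s. rp1_chart j' (inv f (rp1_chart_inv i' s)))"
    "\<forall>n. \<forall>s\<in>V'. (E n has_real_derivative E (Suc n) s) (at s)"
    unfolding smooth_on_def by blast
  have ha: "rp1_chart_inv i t0 = a" using V(2) chart_inv_chart t0_def by simp
  have bj: "b \<in> rp1_cdom j" using V(4) V(3) ha t0_def b_def by auto
  have hb: "rp1_chart_inv j (\<phi> t0) = b" using bj ha by (simp add: \<phi>_def chart_inv_chart b_def)
  have fb: "inv f b = a" using bij b_def by (simp add: bij_is_inj)
  have aj': "a \<in> rp1_cdom j'" using V'(4) V'(3) V'(2) chart_inv_chart fb by fastforce
  have d1: "det (mat 1 :: real^2^2) \<noteq> 0" by simp
  define \<tau> where "\<tau> = (\<lambda>s. rp1_chart i' (mob (mat 1) (rp1_chart_inv j s)))"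
  define \<sigma> where "\<sigma> = (\<lambda>t. rp1_chart j' (mob (mat 1) (rp1_chart_inv i t)))"
  have dent: "snd (wfun i' (mat 1) j (\<phi> t0)) \<noteq> 0"
    using mob_cdom[OF d1, of j "\<phi> t0" i'] hb V'(2) by simp
  have dens: "snd (wfun j' (mat 1) i t0) \<noteq> 0"
    using mob_cdom[OF d1, of i t0 j'] ha aj' by simp
  obtain dt where dt: "(\<tau> has_real_derivative dt) (at (\<phi> t0))"
    using chart_mob_deriv[OF dent] unfolding \<tau>_def by blast
  define ds where "ds = (if i = j' then det (mat 1 :: real^2^2) else - det (mat 1 :: real^2^2)) / (snd (wfun j' (mat 1) i t0))^2"
  have dsd: "(\<sigma> has_real_derivative ds) (at t0)"
    using chart_mob_deriv[OF dens] unfolding \<sigma>_def ds_def by blast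
  have dsnz: "ds \<noteq> 0" using dens by (simp add: ds_def)
  have tb: "\<tau> (\<phi> t0) = rp1_chart i' b" using hb by (simp add: \<tau>_def)
  have dE: "(E 0 has_real_derivative E 1 (\<tau> (\<phi> t0))) (at (\<tau> (\<phi> t0)))"
    using E(2) V'(3) tb by simp
  have dv': "(\<phi> has_real_derivative d) (at t0)" using dv by (simp add: \<phi>_def t0_def)
  have ch: "((\<lambda>t. E 0 (\<tau> (\<phi> t))) has_real_derivative E 1 (\<tau> (\<phi> t0)) * (dt * d)) (at t0)"
    by (rule DERIV_chain2[OF dE DERIV_chain2[OF dt dv']])
  have ev1: "eventually (\<lambda>t. t \<in> V) (nhds t0)"
    using eventually_nhds_in_open[OF V(1) V(3)] t0_def by simp
  have cph: "isCont \<phi> t0" using DERIV_isCont[OF dv'] .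
  have "isCont (\<lambda>t. snd (wfun i' (mat 1) j (\<phi> t))) t0"
    using isCont_o2[OF cph isCont_snd_wfun] .
  then have ev2: "eventually (\<lambda>t. snd (wfun i' (mat 1) j (\<phi> t)) \<noteq> 0) (nhds t0)"
    using ev_nz dent by blast
  have "eventually (\<lambda>t. E 0 (\<tau> (\<phi> t)) = \<sigma> t) (nhds t0)"
    using ev1 ev2
  proof eventually_elim
    case (elim t)
    have fV: "f (rp1_chart_inv i t) \<in> rp1_cdom j" using V(4) elim(1) by blast
    have e1: "rp1_chart_inv j (\<phi> t) = f (rp1_chart_inv i t)"
      using fV by (simp add: \<phi>_def chart_inv_chart)
    have fi': "f (rp1_chart_inv i t) \<in> rp1_cdom i'"
      using mob_cdom[OF d1, of j "\<phi> t" i'] elim(2) e1 by simp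
    have e2: "rp1_chart_inv i' (\<tau> (\<phi> t)) = f (rp1_chart_inv i t)"
      using e1 fi' by (simp add: \<tau>_def chart_inv_chart)
    show ?case using e2 E(1) bij by (simp add: \<sigma>_def bij_is_inj)
  qed
  then have "(\<sigma> has_real_derivative E 1 (\<tau> (\<phi> t0)) * (dt * d)) (at t0)"
    using ch DERIV_cong_ev[of t0 t0 "\<lambda>t. E 0 (\<tau> (\<phi> t))" \<sigma>] by simp
  then have "E 1 (\<tau> (\<phi> t0)) * (dt * d) = ds" using dsd DERIV_unique by blast
  then show ?thesis using dsnz by auto
qed


lemma conj_deriv:
  assumes df: "diffeo f" and V: "open V" "a \<in> rp1_cdom i" "rp1_chart i a \<in> V"
    "\<forall>t\<in>V. f (rp1_chart_inv i t) \<in> rp1_cdom j"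
    and dv: "((\<lambda>t. rp1_chart j (f (rp1_chart_inv i t))) has_real_derivative d) (at (rp1_chart i a))"
    and conj: "\<forall>x. f (mob P x) = mob Q (f x)" and fa: "mob P a = a"
    and dP: "det P \<noteq> 0" and dQ: "det Q \<noteq> 0"
  shows "snd (wfun i P i (rp1_chart i a)) \<noteq> 0" "snd (wfun j Q j (rp1_chart j (f a))) \<noteq> 0"
    "det P / (snd (wfun i P i (rp1_chart i a)))^2 = det Q / (snd (wfun j Q j (rp1_chart j (f a))))^2"
proof -
  have dnz: "d \<noteq> 0" by (rule deriv_nz[OF df V dv])
  define \<phi> where "\<phi> = (\<lambda>t. rp1_chart j (f (rp1_chart_inv i t)))"
  define t0 where "t0 = rp1_chart i a"
  define b where "b = f a"
  have ha: "rp1_chart_inv i t0 = a" using V(2) chart_inv_chart t0_def by simp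
  have bj: "b \<in> rp1_cdom j" using V(4) V(3) ha t0_def b_def by auto
  have s0: "\<phi> t0 = rp1_chart j b" by (simp add: \<phi>_def ha b_def)
  have hb: "rp1_chart_inv j (\<phi> t0) = b" using bj s0 by (simp add: chart_inv_chart)
  have qb: "mob Q b = b" using conj fa b_def by metis
  show denP: "snd (wfun i P i (rp1_chart i a)) \<noteq> 0"
    using mob_cdom[OF dP, of i t0 i] ha fa V(2) t0_def by simp
  show denQ: "snd (wfun j Q j (rp1_chart j (f a))) \<noteq> 0"
    using mob_cdom[OF dQ, of j "\<phi> t0" j] hb qb bj s0 b_def by simp
  define ph where "ph = (\<lambda>t. rp1_chart i (mob P (rp1_chart_inv i t)))"
  define qh where "qh = (\<lambda>t. rp1_chart j (mob Q (rp1_chart_inv j t)))"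
  define dp where "dp = det P / (snd (wfun i P i (rp1_chart i a)))^2"
  define dq where "dq = det Q / (snd (wfun j Q j (rp1_chart j (f a))))^2"
  have dph: "(ph has_real_derivative dp) (at t0)"
    using chart_mob_deriv[OF denP] unfolding ph_def dp_def t0_def by simp
  have dqh: "(qh has_real_derivative dq) (at (\<phi> t0))"
    using chart_mob_deriv[OF denQ] unfolding qh_def dq_def s0 b_def by simp
  have pt0: "ph t0 = t0" using ha fa by (simp add: ph_def t0_def)
  have dv': "(\<phi> has_real_derivative d) (at t0)" using dv by (simp add: \<phi>_def t0_def)
  have c1: "((\<lambda>t. \<phi> (ph t)) has_real_derivative d * dp) (at t0)"
  proof -
    have "(\<phi> has_real_derivative d) (at (ph t0))" using dv' pt0 by simp
    then show ?thesis by (rule DERIV_chain2[OF _ dph])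
  qed
  have c2: "((\<lambda>t. qh (\<phi> t)) has_real_derivative dq * d) (at t0)"
    by (rule DERIV_chain2[OF dqh dv'])
  have ev1: "eventually (\<lambda>t. t \<in> V) (nhds t0)"
    using eventually_nhds_in_open[OF V(1) V(3)] t0_def by simp
  have ev2: "eventually (\<lambda>t. snd (wfun i P i t) \<noteq> 0) (nhds t0)"
    using ev_nz[OF isCont_snd_wfun] denP t0_def by simp
  have "eventually (\<lambda>t. \<phi> (ph t) = qh (\<phi> t)) (nhds t0)"
    using ev1 ev2
  proof eventually_elim
    case (elim t)
    have m: "mob P (rp1_chart_inv i t) \<in> rp1_cdom i" using mob_cdom[OF dP] elim(2) by simp
    have e1: "rp1_chart_inv i (ph t) = mob P (rp1_chart_inv i t)"
      using m by (simp add: ph_def chart_inv_chart)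
    have fV: "f (rp1_chart_inv i t) \<in> rp1_cdom j" using V(4) elim(1) by blast
    have e2: "rp1_chart_inv j (\<phi> t) = f (rp1_chart_inv i t)"
      using fV by (simp add: \<phi>_def chart_inv_chart)
    show ?case using e1 e2 conj by (simp add: \<phi>_def qh_def)
  qed
  then have "((\<lambda>t. qh (\<phi> t)) has_real_derivative d * dp) (at t0)"
    using c1 DERIV_cong_ev[of t0 t0 "\<lambda>t. \<phi> (ph t)" "\<lambda>t. qh (\<phi> t)"] by simp
  then have "d * dp = d * dq" using c2 DERIV_unique by (metis mult.commute)
  then have "dp = dq" using dnz by simp
  then show "det P / (snd (wfun i P i (rp1_chart i a)))^2 = det Q / (snd (wfun j Q j (rp1_chart j (f a))))^2"
    by (simp add: dp_def dq_def)
qed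


lemma ap_diag: "ap (diag2 a b) v = (a * fst v, b * snd v)"
  by (simp add: ap_def diag2_def)

lemma det_diag: "det (diag2 a b) = a * b"
  by (simp add: det_2 diag2_def)

lemma ap_inv_l: "invertible S \<Longrightarrow> ap (matrix_inv S) (ap S v) = v"
  using minv(2)[of S] by (metis ap_mult ap_mat1)

lemma ap_inv_r: "invertible S \<Longrightarrow> ap S (ap (matrix_inv S) v) = v"
  using minv(1)[of S] by (metis ap_mult ap_mat1)

lemma ap_conj: "ap (S ** diag2 a b ** matrix_inv S) v = ap S (ap (diag2 a b) (ap (matrix_inv S) v))"
  by (simp add: ap_mult)

lemma ap_e2: "ap S (0,b) = smul b (ap S (0,1))" by (simp add: ap_def smul_def)
lemma ap_e1: "ap S (a,0) = smul a (ap S (1,0))" by (simp add: ap_def smul_def)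

lemma eig2: "invertible S \<Longrightarrow> ap (S ** diag2 a b ** matrix_inv S) (ap S (0,1)) = smul b (ap S (0,1))"
  using ap_e2[of S b] by (simp add: ap_conj ap_inv_l ap_diag)

lemma eig1: "invertible S \<Longrightarrow> ap (S ** diag2 a b ** matrix_inv S) (ap S (1,0)) = smul a (ap S (1,0))"
  using ap_e1[of S a] by (simp add: ap_conj ap_inv_l ap_diag)

lemma eig_scalar: "invertible S \<Longrightarrow> ap (S ** diag2 a a ** matrix_inv S) v = smul a v"
proof -
  assume S: "invertible S"
  have "ap (diag2 a a) (ap (matrix_inv S) v) = smul a (ap (matrix_inv S) v)"
    by (simp add: ap_diag smul_def)
  then show ?thesis by (simp add: ap_conj ap_smul ap_inv_r S)
qed

lemma det_conj: "invertible (S::real^2^2) \<Longrightarrow> det (S ** diag2 a b ** matrix_inv S) = a * b"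
proof -
  assume S: "invertible S"
  have "det (S ** diag2 a b ** matrix_inv S) = det S * (a * b) * det (matrix_inv S)"
    by (simp add: det_mul det_diag)
  also have "\<dots> = a * b * (det S * det (matrix_inv S))" by simp
  finally show ?thesis using det_minv[OF S] by simp
qed

lemma ap_S_nz: "invertible S \<Longrightarrow> v \<noteq> (0,0) \<Longrightarrow> ap S v \<noteq> (0,0)"
  using ap_nonzero invertible_det_nz by blast

lemma cross_ap: "fst (ap T u) * snd (ap T z) - snd (ap T u) * fst (ap T z) = det T * (fst u * snd z - snd u * fst z)"
  by (simp add: ap_def det_2 algebra_simps)

lemma fixpts:
  assumes T: "invertible T" and q: "q1 \<noteq> q2" and q0: "q1 \<noteq> 0" "q2 \<noteq> 0" and w: "w \<noteq> (0,0)"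
    and fx: "mob (T ** diag2 q1 q2 ** matrix_inv T) (projp w) = projp w"
  shows "projp w = projp (ap T (0,1)) \<or> projp w = projp (ap T (1,0))"
proof -
  define Q where "Q = T ** diag2 q1 q2 ** matrix_inv T"
  have dT: "det T \<noteq> 0" using T invertible_det_nz by blast
  have dQ: "det Q \<noteq> 0" using det_conj[OF T] q0 by (simp add: Q_def)
  have "projp (ap Q w) = projp w" using fx mob_projp[OF w] by (simp add: Q_def)
  then have cr: "fst (ap Q w) * snd w = snd (ap Q w) * fst w"
    using projp_eq_cross ap_nonzero[OF dQ w] w by blast
  define z where "z = ap (matrix_inv T) w"
  have wz: "w = ap T z" using ap_inv_r[OF T] z_def by simp
  have Qz: "ap Q w = ap T (q1 * fst z, q2 * snd z)"
    by (simp add: Q_def ap_conj ap_diag z_def)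
  have "det T * ((q1 * fst z) * snd z - (q2 * snd z) * fst z) = 0"
    using cross_ap[of T "(q1 * fst z, q2 * snd z)" z] cr Qz wz by simp
  then have "(q1 - q2) * (fst z * snd z) = 0" using dT by (simp add: algebra_simps)
  then have "fst z = 0 \<or> snd z = 0" using q by simp
  then show ?thesis
  proof
    assume z1: "fst z = 0"
    then have z2: "snd z \<noteq> 0" using w wz ap_def by (cases z) auto
    have "w = smul (snd z) (ap T (0,1))" using wz z1 ap_e2[of T "snd z"] by (cases z) simp
    then show ?thesis using projp_smul[OF z2] by simp
  next
    assume z2: "snd z = 0"
    then have z1: "fst z \<noteq> 0" using w wz ap_def by (cases z) auto
    have "w = smul (fst z) (ap T (1,0))" using wz z2 ap_e1[of T "fst z"] by (cases z) simp
    then show ?thesis using projp_smul[OF z1] by simp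
  qed
qed


definition Kmat :: "real^2^2" where "Kmat = (\<chi> i j. if i = j then 0 else 1)"

lemma det_K: "det Kmat = -1" by (simp add: det_2 Kmat_def)

lemma mob_diag: "b \<noteq> 0 \<Longrightarrow> mob (diag2 a b) x = (case x of Fin t \<Rightarrow> Fin (a*t/b) | Infty \<Rightarrow> Infty)"
  by (cases x) (simp_all add: diag2_def)

lemma mob_K: "mob Kmat x = (case x of Fin t \<Rightarrow> if t = 0 then Infty else Fin (1/t) | Infty \<Rightarrow> Fin 0)"
  by (cases x) (simp_all add: Kmat_def)

lemma diag_eq: assumes "p2 \<noteq> 0" "q2 \<noteq> 0" "q1/q2 = p1/p2"
  shows "mob (diag2 p1 p2) y = mob (diag2 q1 q2) y"
proof (cases y)
  case (Fin t)
  have "p1*t/p2 = q1*t/q2" using assms by (metis times_divide_eq_left times_divide_eq_right)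
  then show ?thesis using Fin assms by (simp add: mob_diag del: mob.simps)
qed (simp add: mob_diag assms del: mob.simps)

lemma diag_swap: assumes "p1 \<noteq> 0" "p2 \<noteq> 0" "q1 \<noteq> 0" "q2 \<noteq> 0" "q1/q2 = p2/p1"
  shows "mob Kmat (mob (diag2 p1 p2) y) = mob (diag2 q1 q2) (mob Kmat y)"
proof (cases y)
  case (Fin t)
  show ?thesis
  proof (cases "t = 0")
    case True then show ?thesis using Fin assms by (simp add: mob_diag mob_K del: mob.simps)
  next
    case False
    have "1 / (p1*t/p2) = q1 * (1/t) / q2" using assms False by (simp add: field_simps)
    then show ?thesis using Fin assms False by (simp add: mob_diag mob_K del: mob.simps)
  qed
qed (simp add: mob_diag mob_K assms del: mob.simps)


theorem theorem12p7:
  fixes I :: "'i set" and S T :: "real^2^2"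
    and p1 p2 q1 q2 :: "'i \<Rightarrow> real"
  assumes "invertible S" and "invertible T"
    and "\<forall>r\<in>I. p1 r \<noteq> 0 \<and> p2 r \<noteq> 0 \<and> q1 r \<noteq> 0 \<and> q2 r \<noteq> 0"
  shows "(\<exists>f. diffeo f \<and>
            (\<forall>r\<in>I. \<forall>x. f (mob (S ** diag2 (p1 r) (p2 r) ** matrix_inv S) x)
                        = mob (T ** diag2 (q1 r) (q2 r) ** matrix_inv T) (f x)))
         \<longleftrightarrow> (\<exists>\<epsilon>::int \<in> {1, -1}. \<forall>r\<in>I. q1 r / q2 r = (p1 r / p2 r) powi \<epsilon>)"
proof -
  have dS: "det S \<noteq> 0" and dT: "det T \<noteq> 0" using assms(1,2) invertible_det_nz by blast+
  have dSi: "det (matrix_inv S) \<noteq> 0" using det_minv[OF assms(1)] by auto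
  have dTi: "det (matrix_inv T) \<noteq> 0" using det_minv[OF assms(2)] by auto
  show ?thesis
  proof
    assume "\<exists>f. diffeo f \<and>
            (\<forall>r\<in>I. \<forall>x. f (mob (S ** diag2 (p1 r) (p2 r) ** matrix_inv S) x)
                        = mob (T ** diag2 (q1 r) (q2 r) ** matrix_inv T) (f x))"
    then obtain f where df: "diffeo f" and cj: "\<forall>r\<in>I. \<forall>x. f (mob (S ** diag2 (p1 r) (p2 r) ** matrix_inv S) x)
                        = mob (T ** diag2 (q1 r) (q2 r) ** matrix_inv T) (f x)" by blast
    define wS where "wS = ap S (0,1)"
    have wSnz: "wS \<noteq> (0,0)" using ap_S_nz[OF assms(1)] wS_def by simp
    define a where "a = projp wS"
    have "smooth_map f" using df diffeo_def by blast
    then obtain i j V where V: "open V" "a \<in> rp1_cdom i" "rp1_chart i a \<in> V"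
        "\<forall>t\<in>V. f (rp1_chart_inv i t) \<in> rp1_cdom j"
      and sm: "smooth_on V (\<lambda>t. rp1_chart j (f (rp1_chart_inv i t)))"
      unfolding smooth_map_def by blast
    then obtain D where D: "D 0 = (\<lambda>t. rp1_chart j (f (rp1_chart_inv i t)))"
      "\<forall>n. \<forall>t\<in>V. (D n has_real_derivative D (Suc n) t) (at t)" unfolding smooth_on_def by blast
    have "(D 0 has_real_derivative D (Suc 0) (rp1_chart i a)) (at (rp1_chart i a))" using D(2) V(3) by blast
    then have dv: "((\<lambda>t. rp1_chart j (f (rp1_chart_inv i t))) has_real_derivative D (Suc 0) (rp1_chart i a)) (at (rp1_chart i a))"
      by (simp add: D(1))
    define b where "b = f a"
    have bj: "b \<in> rp1_cdom j" using V(4) V(3) chart_inv_chart[OF V(2)] b_def by metis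
    obtain wb where wb: "wb \<noteq> (0,0)" "b = projp wb" using projp_surj by blast
    have snd_wS: "snd (sw i wS) \<noteq> 0" using V(2) cdom_projp[OF wSnz] a_def by simp
    have ta: "rp1_chart i a = fst (sw i wS)/snd (sw i wS)" by (simp add: a_def chart_projp)
    have snd_wb: "snd (sw j wb) \<noteq> 0" using bj cdom_projp[OF wb(1)] wb(2) by simp
    have tb: "rp1_chart j b = fst (sw j wb)/snd (sw j wb)" by (simp add: wb(2) chart_projp)
    define wT2 where "wT2 = ap T (0,1)"
    define wT1 where "wT1 = ap T (1,0)"
    have wT2nz: "wT2 \<noteq> (0,0)" using ap_S_nz[OF assms(2)] wT2_def by simp
    have wT1nz: "wT1 \<noteq> (0,0)" using ap_S_nz[OF assms(2)] wT1_def by simp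
    have T12: "projp wT1 \<noteq> projp wT2"
    proof
      assume "projp wT1 = projp wT2"
      then have "fst wT1 * snd wT2 - snd wT1 * fst wT2 = 0" using projp_eq_cross[OF wT1nz wT2nz] by simp
      then show False using cross_ap[of T "(1,0)" "(0,1)"] dT by (simp add: wT1_def wT2_def)
    qed
    show "\<exists>\<epsilon>::int\<in>{1,-1}. \<forall>r\<in>I. q1 r / q2 r = (p1 r / p2 r) powi \<epsilon>"
    proof (rule bexI[of _ "if b = projp wT2 then 1 else -1"], rule ballI)
      fix r assume r: "r \<in> I"
      have nz: "p1 r \<noteq> 0" "p2 r \<noteq> 0" "q1 r \<noteq> 0" "q2 r \<noteq> 0" using assms(3) r by auto
      define P where "P = S ** diag2 (p1 r) (p2 r) ** matrix_inv S"
      define Q where "Q = T ** diag2 (q1 r) (q2 r) ** matrix_inv T"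
      have dP: "det P = p1 r * p2 r" using det_conj[OF assms(1)] P_def by simp
      have dQ: "det Q = q1 r * q2 r" using det_conj[OF assms(2)] Q_def by simp
      have eP: "ap P wS = smul (p2 r) wS" using eig2[OF assms(1)] by (simp add: P_def wS_def)
      have fa: "mob P a = a" using mob_projp[OF wSnz] eP projp_smul nz by (simp add: a_def)
      have cjr: "\<forall>x. f (mob P x) = mob Q (f x)" using cj r P_def Q_def by simp
      have dP0: "det P \<noteq> 0" and dQ0: "det Q \<noteq> 0" using dP dQ nz by auto
      note cd = conj_deriv[OF df V dv cjr fa dP0 dQ0]
      have denP: "snd (wfun i P i (rp1_chart i a)) = p2 r" unfolding ta by (rule fix_deriv[OF eP wSnz snd_wS])
      have key: "p1 r * p2 r / (p2 r)^2 = q1 r * q2 r / (snd (wfun j Q j (rp1_chart j b)))^2"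
        using cd(3) denP dP dQ b_def by simp
      have lhs: "p1 r * p2 r / (p2 r)^2 = p1 r / p2 r" using nz by (simp add: power2_eq_square)
      show "q1 r / q2 r = (p1 r / p2 r) powi (if b = projp wT2 then 1 else -1)"
      proof (cases "q1 r = q2 r")
        case True
        have eQ: "ap Q wb = smul (q1 r) wb" using eig_scalar[OF assms(2)] True Q_def by simp
        have "snd (wfun j Q j (rp1_chart j b)) = q1 r" unfolding tb by (rule fix_deriv[OF eQ wb(1) snd_wb])
        then have "p1 r / p2 r = 1" using key lhs True nz by (simp add: power2_eq_square)
        then show ?thesis using True nz by simp
      next
        case False
        have qb: "mob Q b = b" using cjr fa b_def by metis
        have "b = projp wT2 \<or> b = projp wT1"
          using fixpts[OF assms(2) False nz(3) nz(4) wb(1)] qb wb(2) Q_def wT1_def wT2_def by simp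
        then show ?thesis
        proof
          assume hb: "b = projp wT2"
          have eQ: "ap Q wT2 = smul (q2 r) wT2" using eig2[OF assms(2)] by (simp add: Q_def wT2_def)
          have s2: "snd (sw j wT2) \<noteq> 0" using bj hb cdom_projp[OF wT2nz] by simp
          have "snd (wfun j Q j (rp1_chart j b)) = q2 r" unfolding hb chart_projp by (rule fix_deriv[OF eQ wT2nz s2])
          then have "p1 r / p2 r = q1 r / q2 r" using key lhs nz by (simp add: power2_eq_square)
          then show ?thesis using hb by simp
        next
          assume hb: "b = projp wT1"
          have hb2: "b \<noteq> projp wT2" using hb T12 by simp
          have eQ: "ap Q wT1 = smul (q1 r) wT1" using eig1[OF assms(2)] by (simp add: Q_def wT1_def)
          have s1: "snd (sw j wT1) \<noteq> 0" using bj hb cdom_projp[OF wT1nz] by simp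
          have "snd (wfun j Q j (rp1_chart j b)) = q1 r" unfolding hb chart_projp by (rule fix_deriv[OF eQ wT1nz s1])
          then have "p1 r / p2 r = q2 r / q1 r" using key lhs nz by (simp add: power2_eq_square)
          then show ?thesis using hb2 nz by (simp add: power_int_minus)
        qed
      qed
    qed simp
  next
    assume "\<exists>\<epsilon>::int\<in>{1,-1}. \<forall>r\<in>I. q1 r / q2 r = (p1 r / p2 r) powi \<epsilon>"
    then obtain \<epsilon> :: int where e: "\<epsilon> \<in> {1,-1}" "\<forall>r\<in>I. q1 r / q2 r = (p1 r / p2 r) powi \<epsilon>" by blast
    define K where "K = (if \<epsilon> = 1 then mat 1 else Kmat)"
    have dK: "det K \<noteq> 0" by (simp add: K_def det_K)
    have Kc: "mob K (mob (diag2 (p1 r) (p2 r)) y) = mob (diag2 (q1 r) (q2 r)) (mob K y)" if r: "r \<in> I" for r y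
    proof -
      have nz: "p1 r \<noteq> 0" "p2 r \<noteq> 0" "q1 r \<noteq> 0" "q2 r \<noteq> 0" using assms(3) r by auto
      show ?thesis
      proof (cases "\<epsilon> = 1")
        case True
        then have "q1 r / q2 r = p1 r / p2 r" using e(2) r by simp
        then show ?thesis using True diag_eq[of "p2 r" "q2 r" "q1 r" "p1 r"] nz by (simp add: K_def)
      next
        case False
        then have "\<epsilon> = -1" using e(1) by simp
        then have "q1 r / q2 r = p2 r / p1 r" using e(2) r by (simp add: power_int_minus)
        then have "mob Kmat (mob (diag2 (p1 r) (p2 r)) y) = mob (diag2 (q1 r) (q2 r)) (mob Kmat y)"
          using diag_swap[of "p1 r" "p2 r" "q1 r" "q2 r" y] nz by blast
        then show ?thesis using False by (simp add: K_def)
      qed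
    qed
    define F where "F = mob (T ** K ** matrix_inv S)"
    have "det (T ** K ** matrix_inv S) \<noteq> 0" using dT dK dSi by (simp add: det_mul)
    then have iF: "invertible (T ** K ** matrix_inv S)" using invertible_det_nz by blast
    have Fx: "F x = mob T (mob K (mob (matrix_inv S) x))" for x
      by (simp add: F_def mob_comp dK dSi del: mob.simps)
    have Px: "mob (S ** diag2 (p1 r) (p2 r) ** matrix_inv S) x = mob S (mob (diag2 (p1 r) (p2 r)) (mob (matrix_inv S) x))"
      if r: "r \<in> I" for r x
    proof -
      have "det (diag2 (p1 r) (p2 r)) \<noteq> 0" using assms(3) r by (simp add: det_diag)
      then show ?thesis by (simp add: mob_comp dSi del: mob.simps)
    qed
    have Qx: "mob (T ** diag2 (q1 r) (q2 r) ** matrix_inv T) x = mob T (mob (diag2 (q1 r) (q2 r)) (mob (matrix_inv T) x))"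
      if r: "r \<in> I" for r x
    proof -
      have "det (diag2 (q1 r) (q2 r)) \<noteq> 0" using assms(3) r by (simp add: det_diag)
      then show ?thesis by (simp add: mob_comp dTi del: mob.simps)
    qed
    have "diffeo F" unfolding F_def by (rule mob_diffeo[OF iF])
    moreover have "\<forall>r\<in>I. \<forall>x. F (mob (S ** diag2 (p1 r) (p2 r) ** matrix_inv S) x)
                        = mob (T ** diag2 (q1 r) (q2 r) ** matrix_inv T) (F x)"
    proof (intro ballI allI)
      fix r x assume r: "r \<in> I"
      show "F (mob (S ** diag2 (p1 r) (p2 r) ** matrix_inv S) x)
                        = mob (T ** diag2 (q1 r) (q2 r) ** matrix_inv T) (F x)"
        unfolding Px[OF r] Qx[OF r] Fx mob_inv_l[OF assms(1)] mob_inv_l[OF assms(2)] Kc[OF r] ..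
    qed
    ultimately show "\<exists>f. diffeo f \<and>
            (\<forall>r\<in>I. \<forall>x. f (mob (S ** diag2 (p1 r) (p2 r) ** matrix_inv S) x)
                        = mob (T ** diag2 (q1 r) (q2 r) ** matrix_inv T) (f x))" by blast
  qed
qed

end
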